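(* Every $d$-uniform properly-connected triangulated hypergraph is a properly-splitted hypergraph.
   Context: A hypergraph $\mathcal{C}$ on a finite vertex set $V$ is a family of pairwise incomparable subsets of $V$ (its edges), each of cardinality at least $2$; it is $d$-uniform if every edge has $d$ elements. $\operatorname{Ind}(\mathcal{C})$ is the simplicial complex on $V$ of subsets containing no edge. For an edge $F$: $\mathcal{C}-F$ is the hypergraph on $V$ with edge set $\mathcal{C}\setminus\{F\}$; $N_{\mathcal{C}}(F)=\bigcup\{E\setminus F : E\in\mathcal{C},\ |E\setminus F|=1\}$; $\mathcal{C}:F$ is the hypergraph on $V\setminus(F\cup N_{\mathcal{C}}(F))$ whose edges are the members of cardinality at least $2$ among the inclusion-minimal members of $\{E\setminus F: E\in\mathcal{C}-F\}$. For $A\subseteq V$, $\mathcal{C}_A=\{E\in\mathcal{C}: E\subseteq A\}$ on $A$. Two distinct vertices are neighbours if some edge contains both; $N_{\mathcal{C}}(x)$ is the set of neighbours of $x$. The $d$-complete hypergraph of order $m$ has as edges all $d$-subsets of its $m$-element vertex set (no edges if $m<d$). Given edges $F,G$ with $|F|\ge|G|$, a proper chain from $F$ to $G$ is a sequence $(E_0=F,x_1,E_1,\dots,x_n,E_n=G)$ with distinct vertices $x_i$ and distinct edges $E_j$ such that $x_1\in E_0$, $x_n\in E_n$, $x_k,x_{k+1}\in E_k$ for $k=1,\dots,n-1$, and $|E_i\cap E_{i+1}|=|E_{i+1}|-1$ for $i=0,\dots,n-1$; its length is $n$; it is irredundant if no subsequence is a proper chain from $F$ to $G$. $\operatorname{dist}_{\mathcal{C}}(F,G)$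 is the minimum length of a proper irredundant chain from $F$ to $G$. A $d$-uniform hypergraph is properly-connected if $\operatorname{dist}_{\mathcal{C}}(F,G)=d-|F\cap G|$ whenever $F\cap G\neq\emptyset$. A $d$-uniform properly-connected hypergraph is triangulated if for every nonempty $A\subseteq V$ there is $v\in A$ such that $N_{\mathcal{C}_A}(v)$ induces a $d$-complete hypergraph of order $|N_{\mathcal{C}_A}(v)|$ and $v$ appears at most twice in any proper irredundant chain in $\mathcal{C}_A$. $\operatorname{conn_h}(\Delta)$ is the largest $k$ with $\tilde H_i(\Delta;\mathbb{Z})=0$ for all $i\le k$ ($\infty$ if all vanish; $\operatorname{conn_h}(\{\emptyset\})=-2$). A hypergraph $\mathcal{C}$ is properly-splitted (recursively on the number of edges) if either $\mathcal{C}$ has no edges, or $\mathcal{C}$ has an edge $F$ with $\operatorname{conn_h}(\operatorname{Ind}(\mathcal{C}:F))\ge \operatorname{conn_h}(\operatorname{Ind}(\mathcal{C}))-|F|+1$ such that both $\mathcal{C}-F$ and $\mathcal{C}:F$ are properly-splitted. *)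

theory Defs
  imports Main "HOL-Library.Sublist" "HOL-Library.Extended_Real"
begin

type_synonym 'a hgraph = "'a set \<times> 'a set set"

definition hypergraph :: "'a hgraph \<Rightarrow> bool" where
  "hypergraph C \<longleftrightarrow> finite (fst C) \<and>
     (\<forall>E\<in>snd C. E \<subseteq> fst C \<and> card E \<ge> 2) \<and>
     (\<forall>E\<in>snd C. \<forall>F\<in>snd C. E \<subseteq> F \<longrightarrow> E = F)"

definition uniform :: "nat \<Rightarrow> 'a hgraph \<Rightarrow> bool" where
  "uniform d C \<longleftrightarrow> (\<forall>E\<in>snd C. card E = d)"

definition Ind :: "'a hgraph \<Rightarrow> 'a set set" where
  "Ind C = {S. S \<subseteq> fst C \<and> (\<forall>E\<in>snd C. \<not> E \<subseteq> S)}"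

definition del_edge :: "'a hgraph \<Rightarrow> 'a set \<Rightarrow> 'a hgraph" where
  "del_edge C F = (fst C, snd C - {F})"

definition edge_nbhd :: "'a hgraph \<Rightarrow> 'a set \<Rightarrow> 'a set" where
  "edge_nbhd C F = \<Union>{E - F | E. E \<in> snd C \<and> card (E - F) = 1}"

definition colon :: "'a hgraph \<Rightarrow> 'a set \<Rightarrow> 'a hgraph" where
  "colon C F =
     (let D = {E - F | E. E \<in> snd C - {F}}
      in (fst C - (F \<union> edge_nbhd C F),
          {M \<in> D. (\<forall>M'\<in>D. M' \<subseteq> M \<longrightarrow> M' = M) \<and> card M \<ge> 2}))"

definition induced :: "'a hgraph \<Rightarrow> 'a set \<Rightarrow> 'a hgraph" where
  "induced C A = (A, {E \<in> snd C. E \<subseteq> A})"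

definition nbrs :: "'a hgraph \<Rightarrow> 'a \<Rightarrow> 'a set" where
  "nbrs C x = {y. y \<noteq> x \<and> (\<exists>E\<in>snd C. x \<in> E \<and> y \<in> E)}"

definition induces_complete :: "nat \<Rightarrow> 'a hgraph \<Rightarrow> 'a set \<Rightarrow> bool" where
  "induces_complete d C A \<longleftrightarrow> snd (induced C A) = {S. S \<subseteq> A \<and> card S = d}"

text \<open>A chain (E_0,x_1,E_1,...,x_n,E_n) is represented by the edge list es = [E_0,...,E_n]
  and the vertex list xs = [x_1,...,x_n]; its underlying sequence is the interleaving.\<close>

fun interleave :: "'b list \<Rightarrow> 'a list \<Rightarrow> ('b + 'a) list" where
  "interleave (e # es) (x # xs) = Inl e # Inr x # interleave es xs"
| "interleave es [] = map Inl es"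
| "interleave [] xs = map Inr xs"

definition proper_chain :: "'a hgraph \<Rightarrow> 'a set \<Rightarrow> 'a set \<Rightarrow> 'a set list \<Rightarrow> 'a list \<Rightarrow> bool" where
  "proper_chain C F G es xs \<longleftrightarrow>
     (let n = length xs in
      length es = n + 1 \<and> set es \<subseteq> snd C \<and> card F \<ge> card G \<and>
      es ! 0 = F \<and> es ! n = G \<and> distinct xs \<and> distinct es \<and>
      (n \<ge> 1 \<longrightarrow> xs ! 0 \<in> es ! 0 \<and> xs ! (n - 1) \<in> es ! n) \<and>
      (\<forall>k. 1 \<le> k \<and> k \<le> n - 1 \<longrightarrow> xs ! (k - 1) \<in> es ! k \<and> xs ! k \<in> es ! k) \<and>
      (\<forall>i < n. card (es ! i \<inter> es ! (i + 1)) = card (es ! (i + 1)) - 1))"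

definition irredundant_chain :: "'a hgraph \<Rightarrow> 'a set \<Rightarrow> 'a set \<Rightarrow> 'a set list \<Rightarrow> 'a list \<Rightarrow> bool" where
  "irredundant_chain C F G es xs \<longleftrightarrow> proper_chain C F G es xs \<and>
     (\<forall>es' xs'. proper_chain C F G es' xs' \<and>
        subseq (interleave es' xs') (interleave es xs) \<longrightarrow>
        interleave es' xs' = interleave es xs)"

definition chain_dist :: "'a hgraph \<Rightarrow> 'a set \<Rightarrow> 'a set \<Rightarrow> enat" where
  "chain_dist C F G = Inf {enat (length xs) | es xs. irredundant_chain C F G es xs}"

definition properly_connected :: "nat \<Rightarrow> 'a hgraph \<Rightarrow> bool" where
  "properly_connected d C \<longleftrightarrow> uniform d C \<and>
     (\<forall>F\<in>snd C. \<forall>G\<in>snd C. F \<inter> G \<noteq> {} \<longrightarrow>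
        chain_dist C F G = enat (d - card (F \<inter> G)))"

definition triangulated :: "nat \<Rightarrow> 'a hgraph \<Rightarrow> bool" where
  "triangulated d C \<longleftrightarrow> uniform d C \<and> properly_connected d C \<and>
     (\<forall>A. A \<noteq> {} \<and> A \<subseteq> fst C \<longrightarrow>
        (\<exists>v\<in>A. induces_complete d (induced C A) (nbrs (induced C A) v) \<and>
           (\<forall>F G es xs. irredundant_chain (induced C A) F G es xs \<longrightarrow>
              card {j. j < length es \<and> v \<in> es ! j} \<le> 2)))"

text \<open>Chains of degree i of a simplicial complex Delta (a set of finite faces, the empty
  face included): integer-valued functions supported on faces of cardinality i+1.
  Orientation is induced by the linear order of the vertex type.\<close>

definition chains :: "'a set set \<Rightarrow> int \<Rightarrow> ('a set \<Rightarrow> int) set" where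
  "chains \<Delta> i = {c. \<forall>\<sigma>. c \<sigma> \<noteq> 0 \<longrightarrow> \<sigma> \<in> \<Delta> \<and> int (card \<sigma>) = i + 1}"

definition bdry :: "'a::linorder set set \<Rightarrow> ('a set \<Rightarrow> int) \<Rightarrow> 'a set \<Rightarrow> int" where
  "bdry \<Delta> c \<tau> = (\<Sum>v \<in> \<Union>\<Delta> - \<tau>. (-1) ^ card {u \<in> \<tau>. u < v} * c (insert v \<tau>))"

definition homology_vanishes :: "'a::linorder set set \<Rightarrow> int \<Rightarrow> bool" where
  "homology_vanishes \<Delta> i \<longleftrightarrow>
     (\<forall>c \<in> chains \<Delta> i. bdry \<Delta> c = (\<lambda>_. 0) \<longrightarrow> (\<exists>b \<in> chains \<Delta> (i + 1). c = bdry \<Delta> b))"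

text \<open>Degrees below -1 vanish trivially, so
  conn_h of the complex consisting only of the empty face is -2.\<close>
definition conn_h :: "'a::linorder set set \<Rightarrow> ereal" where
  "conn_h \<Delta> = Sup {ereal (real_of_int k) | k. \<forall>i \<le> k. homology_vanishes \<Delta> i}"

inductive properly_splitted :: "'a::linorder hgraph \<Rightarrow> bool" where
  no_edges: "snd C = {} \<Longrightarrow> properly_splitted C"
| split: "F \<in> snd C \<Longrightarrow>
    conn_h (Ind (colon C F)) \<ge> conn_h (Ind C) - ereal (real (card F)) + 1 \<Longrightarrow>
    properly_splitted (del_edge C F) \<Longrightarrow> properly_splitted (colon C F) \<Longrightarrow>
    properly_splitted C"

end

theory Submission
  imports Defs
begin
definition sg :: "'a::linorder set \<Rightarrow> 'a \<Rightarrow> int" where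
  "sg A x = (-1) ^ card {u\<in>A. u < x}"

definition bdW :: "'a::linorder set \<Rightarrow> ('a set \<Rightarrow> int) \<Rightarrow> 'a set \<Rightarrow> int" where
  "bdW W c \<tau> = (\<Sum>x\<in>W - \<tau>. sg \<tau> x * c (insert x \<tau>))"

lemma sg_sq[simp]: "sg A x * sg A x = 1"
  unfolding sg_def by (simp add: power_mult_distrib[symmetric])

lemma sg_insert:
  assumes "finite A" "u \<notin> A"
  shows "sg (insert u A) x = (if u < x then - sg A x else sg A x)"
proof -
  have "{w \<in> insert u A. w < x} = (if u < x then insert u {w\<in>A. w < x} else {w\<in>A. w < x})"
    by auto
  then show ?thesis using assms unfolding sg_def by auto
qed

lemma sg_Un:
  assumes "finite A" "finite B" "A \<inter> B = {}"
  shows "sg (A \<union> B) x = sg A x * sg B x"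
proof -
  have "{w \<in> A \<union> B. w < x} = {w\<in>A. w < x} \<union> {w\<in>B. w < x}" by auto
  moreover have "card ({w\<in>A. w < x} \<union> {w\<in>B. w < x}) = card {w\<in>A. w < x} + card {w\<in>B. w < x}"
    using assms by (intro card_Un_disjoint) auto
  ultimately show ?thesis unfolding sg_def by (simp add: power_add)
qed

lemma bdry_eq:
  assumes "finite W" "\<Union>\<Delta> \<subseteq> W" "\<And>\<sigma>. c \<sigma> \<noteq> 0 \<Longrightarrow> \<sigma> \<in> \<Delta>"
  shows "bdry \<Delta> c \<tau> = bdW W c \<tau>"
  unfolding bdry_def bdW_def sg_def
proof (rule sum.mono_neutral_left)
  show "finite (W - \<tau>)" using assms by auto
  show "\<Union> \<Delta> - \<tau> \<subseteq> W - \<tau>" using assms by auto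
  show "\<forall>i\<in>W - \<tau> - (\<Union> \<Delta> - \<tau>). (- 1) ^ card {u \<in> \<tau>. u < i} * c (insert i \<tau>) = 0"
  proof
    fix i assume "i \<in> W - \<tau> - (\<Union> \<Delta> - \<tau>)"
    then have "insert i \<tau> \<notin> \<Delta>" by blast
    then have "c (insert i \<tau>) = 0" using assms(3) by blast
    then show "(- 1) ^ card {u \<in> \<tau>. u < i} * c (insert i \<tau>) = 0" by simp
  qed
qed

lemma bdW_bdW:
  assumes finW: "finite W" and supp: "\<And>\<sigma>. c \<sigma> \<noteq> 0 \<Longrightarrow> \<sigma> \<subseteq> W"
  shows "bdW W (bdW W c) \<tau> = 0"
proof (cases "\<tau> \<subseteq> W")
  case False
  have "bdW W c (insert x \<tau>) = 0" for x
    unfolding bdW_def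
  proof (intro sum.neutral ballI)
    fix y assume "y \<in> W - insert x \<tau>"
    have "\<not> insert y (insert x \<tau>) \<subseteq> W" using False by blast
    then have "c (insert y (insert x \<tau>)) = 0" using supp by blast
    then show "sg (insert x \<tau>) y * c (insert y (insert x \<tau>)) = 0" by simp
  qed
  then show ?thesis unfolding bdW_def by simp
next
  case True
  then have ft: "finite \<tau>" using finW finite_subset by blast
  define f where "f x y = sg \<tau> x * (if x < y then - sg \<tau> y else sg \<tau> y) * c (insert y (insert x \<tau>))" for x y
  define P where "P = Sigma (W - \<tau>) (\<lambda>x. W - insert x \<tau>)"
  have "bdW W (bdW W c) \<tau> = (\<Sum>x\<in>W - \<tau>. \<Sum>y\<in>W - insert x \<tau>. f x y)"
    unfolding bdW_def f_def
    by (intro sum.cong refl) (simp add: sum_distrib_left sg_insert ft mult.assoc)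
  also have "\<dots> = (\<Sum>p\<in>P. f (fst p) (snd p))"
    unfolding P_def using finW by (subst sum.Sigma) (auto simp: case_prod_beta)
  finally have e1: "bdW W (bdW W c) \<tau> = (\<Sum>p\<in>P. f (fst p) (snd p))" .
  have sw: "prod.swap ` P = P" unfolding P_def by force
  have "(\<Sum>p\<in>P. f (fst p) (snd p)) = (\<Sum>p\<in>prod.swap ` P. f (fst p) (snd p))" using sw by simp
  also have "\<dots> = (\<Sum>p\<in>P. f (snd p) (fst p))"
    by (subst sum.reindex) auto
  also have "\<dots> = (\<Sum>p\<in>P. - f (fst p) (snd p))"
  proof (intro sum.cong refl)
    fix p assume "p \<in> P"
    then have "fst p \<noteq> snd p" unfolding P_def by auto
    then show "f (snd p) (fst p) = - f (fst p) (snd p)"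
      unfolding f_def by (cases "fst p < snd p") (auto simp: insert_commute)
  qed
  also have "\<dots> = - (\<Sum>p\<in>P. f (fst p) (snd p))" by (simp add: sum_negf)
  finally show ?thesis using e1 by simp
qed

lemma prod_sg_sq: "finite A \<Longrightarrow> (\<Prod>x\<in>A. sg F x) * (\<Prod>x\<in>A. sg F x) = 1"
  by (simp add: prod.distrib[symmetric])

lemma prod_if_m1: "finite A \<Longrightarrow> (\<Prod>x\<in>A. (if P x then -1 else 1::int)) = (-1) ^ card {x\<in>A. P x}"
proof (induction A rule: finite_induct)
  case empty then show ?case by simp
next
  case (insert a A)
  have "{x \<in> insert a A. P x} = (if P a then insert a {x\<in>A. P x} else {x\<in>A. P x})" by auto
  then show ?case using insert by auto
qed

lemma sign_combine:
  assumes fr: "finite \<rho>" and fF: "finite F" and vF: "v \<in> F" and dj: "\<rho> \<inter> F = {}"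
  shows "sg ((F - {v}) \<union> \<rho>) v * (\<Prod>x\<in>\<rho>. sg F x) * (\<Prod>x\<in>\<rho>. sg (F - {v}) x)
         = sg (F - {v}) v * (-1) ^ card \<rho>"
proof -
  have vr: "v \<notin> \<rho>" using vF dj by auto
  have a: "sg ((F - {v}) \<union> \<rho>) v = sg (F - {v}) v * sg \<rho> v"
    using fr fF dj by (intro sg_Un) auto
  have F_eq: "F = insert v (F - {v})" using vF by auto
  have b: "sg F x * sg (F - {v}) x = (if v < x then -1 else 1)" for x
    by (subst F_eq, subst sg_insert) (use fF in auto)
  have c: "(\<Prod>x\<in>\<rho>. sg F x) * (\<Prod>x\<in>\<rho>. sg (F - {v}) x) = (-1) ^ card {x\<in>\<rho>. v < x}"
    by (simp add: prod.distrib[symmetric] b prod_if_m1 fr)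
  have d: "card {u\<in>\<rho>. u < v} + card {x\<in>\<rho>. v < x} = card \<rho>"
  proof -
    have "\<rho> = {u\<in>\<rho>. u < v} \<union> {x\<in>\<rho>. v < x}" using vr by (auto, metis neq_iff)
    moreover have "card ({u\<in>\<rho>. u < v} \<union> {x\<in>\<rho>. v < x}) = card {u\<in>\<rho>. u < v} + card {x\<in>\<rho>. v < x}"
      using fr by (intro card_Un_disjoint) auto
    ultimately show ?thesis by metis
  qed
  show ?thesis
    by (simp add: a mult.assoc c[unfolded mult.assoc]) (simp add: sg_def power_add[symmetric] d)
qed

lemma key_homology:
  fixes W V' F :: "'a::linorder set" and v :: 'a and K L :: "'a set set" and d :: nat and j :: int
  assumes finW: "finite W" and vF: "v \<in> F" and FW: "F \<subseteq> W" and V'W: "V' \<subseteq> W"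
    and FV': "F \<inter> V' = {}"
    and KW: "K \<subseteq> Pow W" and LV: "L \<subseteq> Pow V'"
    and K1: "\<And>w \<rho>. w \<in> F \<Longrightarrow> \<rho> \<in> L \<Longrightarrow> (F - {w}) \<union> \<rho> \<in> K"
    and K2: "\<And>\<sigma>. F \<subseteq> \<sigma> \<Longrightarrow> \<sigma> \<notin> K"
    and K3: "\<And>x \<sigma>. x \<in> W \<Longrightarrow> x \<notin> F \<Longrightarrow> x \<notin> V' \<Longrightarrow> insert x (F - {v}) \<subseteq> \<sigma> \<Longrightarrow> \<sigma> \<notin> K"
    and K5: "\<And>\<rho>. \<rho> \<subseteq> V' \<Longrightarrow> (F - {v}) \<union> \<rho> \<in> K \<Longrightarrow> \<rho> \<in> L"
    and cF: "card F = d"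
    and nv: "\<not> homology_vanishes L j"
  shows "\<not> homology_vanishes K (j + int d - 1)"
proof
  assume hK: "homology_vanishes K (j + int d - 1)"
  from nv obtain z where zc: "z \<in> chains L j" and zcyc: "bdry L z = (\<lambda>_. 0)"
    and znb: "\<not> (\<exists>b\<in>chains L (j + 1). z = bdry L b)"
    unfolding homology_vanishes_def by blast
  have finF: "finite F" using finW FW finite_subset by blast
  have finV: "finite V'" using finW V'W finite_subset by blast
  have zsupp: "z \<sigma> \<noteq> 0 \<Longrightarrow> \<sigma> \<in> L \<and> int (card \<sigma>) = j + 1" for \<sigma>
    using zc unfolding chains_def by blast
  have zV: "z \<sigma> \<noteq> 0 \<Longrightarrow> \<sigma> \<subseteq> V'" for \<sigma> using zsupp LV by blast
  have UL: "\<Union>L \<subseteq> V'" using LV by blast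
  have UK: "\<Union>K \<subseteq> W" using KW by blast
  have bz: "bdW V' z \<rho> = 0" for \<rho>
  proof -
    have "bdry L z \<rho> = bdW V' z \<rho>" using finV UL zsupp by (intro bdry_eq) auto
    then show ?thesis using zcyc by (metis)
  qed
  define \<epsilon> where "\<epsilon> \<rho> = (\<Prod>x\<in>\<rho>. sg F x)" for \<rho>
  define \<mu> where "\<mu> \<rho> = (\<Prod>x\<in>\<rho>. sg (F - {v}) x)" for \<rho>
  define Y where "Y \<sigma> = (if F \<subseteq> \<sigma> then \<epsilon> (\<sigma> - F) * z (\<sigma> - F) else 0)" for \<sigma>
  define Z where "Z = bdW W Y"
  have Ysupp: "Y \<sigma> \<noteq> 0 \<Longrightarrow> \<sigma> \<subseteq> W" for \<sigma>
  proof -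
    assume "Y \<sigma> \<noteq> 0"
    then have "F \<subseteq> \<sigma>" "z (\<sigma> - F) \<noteq> 0" unfolding Y_def by (auto split: if_splits)
    then show "\<sigma> \<subseteq> W" using zV FW V'W by blast
  qed
  have Zcyc: "bdW W Z \<tau> = 0" for \<tau> unfolding Z_def using finW Ysupp by (rule bdW_bdW)
  have Z_F: "Z \<sigma> = 0" if "F \<subseteq> \<sigma>" "\<sigma> \<subseteq> W" for \<sigma>
  proof -
    define \<rho>0 where "\<rho>0 = \<sigma> - F"
    have fr0: "finite \<rho>0" unfolding \<rho>0_def using that finW finite_subset by blast
    have dj0: "F \<inter> \<rho>0 = {}" unfolding \<rho>0_def by blast
    have sig: "\<sigma> = F \<union> \<rho>0" unfolding \<rho>0_def using that by blast
    have "Z \<sigma> = (\<Sum>y\<in>W - \<sigma>. \<epsilon> \<rho>0 * (sg \<rho>0 y * z (insert y \<rho>0)))"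
      unfolding Z_def bdW_def
    proof (intro sum.cong refl)
      fix y assume y: "y \<in> W - \<sigma>"
      then have yF: "y \<notin> F" "y \<notin> \<rho>0" using sig by auto
      have i1: "F \<subseteq> insert y \<sigma>" using that by blast
      have i2: "insert y \<sigma> - F = insert y \<rho>0" using sig yF dj0 by blast
      have e: "\<epsilon> (insert y \<rho>0) = sg F y * \<epsilon> \<rho>0" unfolding \<epsilon>_def using fr0 yF by simp
      have s: "sg \<sigma> y = sg F y * sg \<rho>0 y" using sig finF fr0 dj0 by (simp add: sg_Un)
      have "sg \<sigma> y * Y (insert y \<sigma>) = (sg F y * sg F y) * (\<epsilon> \<rho>0 * (sg \<rho>0 y * z (insert y \<rho>0)))"
        unfolding Y_def using i1 i2 e s by (simp add: algebra_simps)
      then show "sg \<sigma> y * Y (insert y \<sigma>) = \<epsilon> \<rho>0 * (sg \<rho>0 y * z (insert y \<rho>0))" by simp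
    qed
    also have "\<dots> = \<epsilon> \<rho>0 * (\<Sum>y\<in>W - \<sigma>. sg \<rho>0 y * z (insert y \<rho>0))" by (simp add: sum_distrib_left)
    also have "(\<Sum>y\<in>W - \<sigma>. sg \<rho>0 y * z (insert y \<rho>0)) = (\<Sum>y\<in>V' - \<rho>0. sg \<rho>0 y * z (insert y \<rho>0))"
    proof (rule sum.mono_neutral_right)
      show "finite (W - \<sigma>)" using finW by auto
      show "V' - \<rho>0 \<subseteq> W - \<sigma>" using V'W FV' sig by auto
      show "\<forall>i\<in>W - \<sigma> - (V' - \<rho>0). sg \<rho>0 i * z (insert i \<rho>0) = 0"
      proof
        fix i assume "i \<in> W - \<sigma> - (V' - \<rho>0)"
        then have "\<not> insert i \<rho>0 \<subseteq> V'" using sig by auto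
        then show "sg \<rho>0 i * z (insert i \<rho>0) = 0" using zV by (metis mult_zero_right)
      qed
    qed
    also have "\<dots> = 0" using bz[of \<rho>0] unfolding bdW_def .
    finally show ?thesis by simp
  qed
  have Zsupp: "Z \<sigma> \<noteq> 0 \<Longrightarrow> \<sigma> \<in> K \<and> int (card \<sigma>) = j + int d - 1 + 1" for \<sigma>
  proof -
    assume Zn: "Z \<sigma> \<noteq> 0"
    then obtain x where x: "x \<in> W - \<sigma>" and Yx: "Y (insert x \<sigma>) \<noteq> 0"
      unfolding Z_def bdW_def by (metis (no_types, lifting) mult_zero_right sum.neutral)
    have Fx: "F \<subseteq> insert x \<sigma>" and zx: "z (insert x \<sigma> - F) \<noteq> 0"
      using Yx unfolding Y_def by (auto split: if_splits)
    define \<rho> where "\<rho> = insert x \<sigma> - F"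
    have rL: "\<rho> \<in> L" and rc: "int (card \<rho>) = j + 1" using zsupp zx unfolding \<rho>_def by auto
    have rV: "\<rho> \<subseteq> V'" using rL LV by blast
    have sW: "\<sigma> \<subseteq> W" using Ysupp Yx by blast
    show ?thesis
    proof (cases "x \<in> F")
      case True
      have sig: "\<sigma> = (F - {x}) \<union> \<rho>" unfolding \<rho>_def using True Fx x by blast
      have "\<sigma> \<in> K" using K1[OF True rL] sig by simp
      moreover have "card \<sigma> = card (F - {x}) + card \<rho>"
        unfolding sig using finF finV rV FV' by (intro card_Un_disjoint) (auto intro: finite_subset)
      moreover have "card (F - {x}) = d - 1" using cF True finF by simp
      moreover have "d \<ge> 1" using cF True finF card_0_eq by fastforce
      ultimately show ?thesis using rc by simp
    next
      case False
      then have "F \<subseteq> \<sigma>" using Fx by blast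
      then have "Z \<sigma> = 0" using Z_F sW by blast
      then show ?thesis using Zn by simp
    qed
  qed
  have ZK: "Z \<in> chains K (j + int d - 1)" unfolding chains_def using Zsupp by blast
  have Zb: "bdry K Z = (\<lambda>_. 0)"
  proof
    fix \<tau> have "bdry K Z \<tau> = bdW W Z \<tau>" using finW UK Zsupp by (intro bdry_eq) auto
    then show "bdry K Z \<tau> = 0" using Zcyc by simp
  qed
  from hK ZK Zb obtain B where BK: "B \<in> chains K (j + int d - 1 + 1)" and ZB: "Z = bdry K B"
    unfolding homology_vanishes_def by blast
  have Bsupp: "B \<sigma> \<noteq> 0 \<Longrightarrow> \<sigma> \<in> K \<and> int (card \<sigma>) = j + int d - 1 + 1 + 1" for \<sigma>
    using BK unfolding chains_def by blast
  have ZB': "Z \<sigma> = bdW W B \<sigma>" for \<sigma>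
    using ZB finW UK Bsupp by (metis bdry_eq)
  define b where "b \<rho> = (if \<rho> \<subseteq> V' then \<mu> \<rho> * B ((F - {v}) \<union> \<rho>) else 0)" for \<rho>
  have vnV: "v \<notin> V'" using vF FV' by blast
  have cFv: "card (F - {v}) = d - 1" using cF vF finF by simp
  have d1: "d \<ge> 1" using cF vF finF card_0_eq by fastforce
  have bsupp: "b \<rho> \<noteq> 0 \<Longrightarrow> \<rho> \<in> L \<and> int (card \<rho>) = j + 1 + 1" for \<rho>
  proof -
    assume bn: "b \<rho> \<noteq> 0"
    then have rV: "\<rho> \<subseteq> V'" and Bn: "B ((F - {v}) \<union> \<rho>) \<noteq> 0" unfolding b_def by (auto split: if_splits)
    from Bsupp[OF Bn] have inK: "(F - {v}) \<union> \<rho> \<in> K" and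
      cc: "int (card ((F - {v}) \<union> \<rho>)) = j + int d - 1 + 1 + 1" by auto
    have "card ((F - {v}) \<union> \<rho>) = card (F - {v}) + card \<rho>"
      using finF finV rV FV' by (intro card_Un_disjoint) (auto intro: finite_subset)
    then have "int (card \<rho>) = j + 1 + 1" using cc cFv d1 by simp
    then show ?thesis using K5[OF rV inK] by simp
  qed
  have bC: "b \<in> chains L (j + 1)" unfolding chains_def using bsupp by blast
  have Zval: "Z ((F - {v}) \<union> \<rho>) = sg ((F - {v}) \<union> \<rho>) v * (\<epsilon> \<rho> * z \<rho>)" if rV: "\<rho> \<subseteq> V'" for \<rho>
  proof -
    define \<sigma> where "\<sigma> = (F - {v}) \<union> \<rho>"
    have vs: "v \<notin> \<sigma>" unfolding \<sigma>_def using rV vnV by blast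
    have vW: "v \<in> W - \<sigma>" using vs vF FW by blast
    have "Z \<sigma> = sg \<sigma> v * Y (insert v \<sigma>)"
      unfolding Z_def bdW_def
    proof -
      have "(\<Sum>x\<in>W - \<sigma>. sg \<sigma> x * Y (insert x \<sigma>)) = (\<Sum>x\<in>{v}. sg \<sigma> x * Y (insert x \<sigma>))"
      proof (rule sum.mono_neutral_right)
        show "finite (W - \<sigma>)" using finW by auto
        show "{v} \<subseteq> W - \<sigma>" using vW by blast
        show "\<forall>x\<in>W - \<sigma> - {v}. sg \<sigma> x * Y (insert x \<sigma>) = 0"
        proof
          fix x assume "x \<in> W - \<sigma> - {v}"
          then have "\<not> F \<subseteq> insert x \<sigma>" using vs vF by blast
          then show "sg \<sigma> x * Y (insert x \<sigma>) = 0" unfolding Y_def by simp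
        qed
      qed
      then show "(\<Sum>x\<in>W - \<sigma>. sg \<sigma> x * Y (insert x \<sigma>)) = sg \<sigma> v * Y (insert v \<sigma>)" by simp
    qed
    moreover have "insert v \<sigma> - F = \<rho>" "F \<subseteq> insert v \<sigma>" unfolding \<sigma>_def using rV FV' vF by auto
    ultimately show ?thesis unfolding \<sigma>_def Y_def by simp
  qed
  have Bval: "bdW W B ((F - {v}) \<union> \<rho>) = \<mu> \<rho> * bdW V' b \<rho>" if rV: "\<rho> \<subseteq> V'" for \<rho>
  proof -
    define \<sigma> where "\<sigma> = (F - {v}) \<union> \<rho>"
    have fr: "finite \<rho>" using rV finV finite_subset by blast
    have Bz: "B \<tau> = 0" if "\<tau> \<notin> K" for \<tau> using Bsupp that by blast
    have "bdW W B \<sigma> = (\<Sum>x\<in>V' - \<rho>. sg \<sigma> x * B (insert x \<sigma>))"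
      unfolding bdW_def
    proof (rule sum.mono_neutral_right)
      show "finite (W - \<sigma>)" using finW by auto
      show "V' - \<rho> \<subseteq> W - \<sigma>" unfolding \<sigma>_def using V'W FV' by auto
      show "\<forall>x\<in>W - \<sigma> - (V' - \<rho>). sg \<sigma> x * B (insert x \<sigma>) = 0"
      proof
        fix x assume x: "x \<in> W - \<sigma> - (V' - \<rho>)"
        then have xV: "x \<notin> V'" unfolding \<sigma>_def by auto
        show "sg \<sigma> x * B (insert x \<sigma>) = 0"
        proof (cases "x \<in> F")
          case True
          then have "x = v" using x unfolding \<sigma>_def by auto
          then have "F \<subseteq> insert x \<sigma>" unfolding \<sigma>_def by auto
          then show ?thesis using K2 Bz by simp
        next
          case False
          have "insert x (F - {v}) \<subseteq> insert x \<sigma>" unfolding \<sigma>_def by auto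
          then have "insert x \<sigma> \<notin> K" using K3[of x] x xV False by blast
          then show ?thesis using Bz by simp
        qed
      qed
    qed
    also have "\<dots> = (\<Sum>x\<in>V' - \<rho>. \<mu> \<rho> * (sg \<rho> x * b (insert x \<rho>)))"
    proof (intro sum.cong refl)
      fix x assume x: "x \<in> V' - \<rho>"
      have xF: "x \<notin> F - {v}" using x FV' by auto
      have ins: "insert x \<sigma> = (F - {v}) \<union> insert x \<rho>" unfolding \<sigma>_def by auto
      have m: "\<mu> (insert x \<rho>) = sg (F - {v}) x * \<mu> \<rho>" unfolding \<mu>_def using fr x by simp
      have s: "sg \<sigma> x = sg (F - {v}) x * sg \<rho> x" unfolding \<sigma>_def
        using finF fr FV' rV by (intro sg_Un) auto
      have mm: "\<mu> (insert x \<rho>) * \<mu> (insert x \<rho>) = 1" unfolding \<mu>_def using fr by (intro prod_sg_sq) auto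
      have bx: "b (insert x \<rho>) = \<mu> (insert x \<rho>) * B (insert x \<sigma>)"
        unfolding b_def using x rV ins by auto
      have "\<mu> \<rho> * (sg \<rho> x * b (insert x \<rho>)) = \<mu> \<rho> * sg \<rho> x * sg (F - {v}) x * \<mu> \<rho> * B (insert x \<sigma>)"
        using bx m by (simp add: algebra_simps)
      also have "\<dots> = (\<mu> \<rho> * \<mu> \<rho>) * (sg (F - {v}) x * sg \<rho> x) * B (insert x \<sigma>)"
        by (simp add: algebra_simps)
      also have "\<dots> = sg \<sigma> x * B (insert x \<sigma>)"
      proof -
        have "\<mu> \<rho> * \<mu> \<rho> = 1" unfolding \<mu>_def using fr by (intro prod_sg_sq)
        then show ?thesis using s by simp
      qed
      finally show "sg \<sigma> x * B (insert x \<sigma>) = \<mu> \<rho> * (sg \<rho> x * b (insert x \<rho>))" by simp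
    qed
    also have "\<dots> = \<mu> \<rho> * bdW V' b \<rho>" unfolding bdW_def by (simp add: sum_distrib_left)
    finally show ?thesis unfolding \<sigma>_def .
  qed
  define s where "s = sg (F - {v}) v * (-1) ^ nat (j + 1)"
  have zeq: "z \<rho> = s * bdW V' b \<rho>" for \<rho>
  proof (cases "\<rho> \<subseteq> V'")
    case False
    then have "z \<rho> = 0" using zV by blast
    moreover have "bdW V' b \<rho> = 0" unfolding bdW_def
    proof (intro sum.neutral ballI)
      fix x assume "x \<in> V' - \<rho>"
      have "\<not> insert x \<rho> \<subseteq> V'" using False by blast
      then have "b (insert x \<rho>) = 0" unfolding b_def by (rule if_not_P)
      then show "sg \<rho> x * b (insert x \<rho>) = 0" by simp
    qed
    ultimately show ?thesis by simp
  next
    case True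
    have fr: "finite \<rho>" using True finV finite_subset by blast
    have dj: "\<rho> \<inter> F = {}" using True FV' by blast
    define c where "c = sg ((F - {v}) \<union> \<rho>) v * \<epsilon> \<rho>"
    have cc: "c * c = 1"
    proof -
      have "c * c = (sg ((F - {v}) \<union> \<rho>) v * sg ((F - {v}) \<union> \<rho>) v) * (\<epsilon> \<rho> * \<epsilon> \<rho>)"
        unfolding c_def by (simp add: algebra_simps)
      then show ?thesis unfolding \<epsilon>_def using fr by (simp add: prod_sg_sq)
    qed
    have e1: "c * z \<rho> = \<mu> \<rho> * bdW V' b \<rho>"
      using Zval[OF True] Bval[OF True] ZB' unfolding c_def by (simp add: mult.assoc)
    have sc: "c * \<mu> \<rho> = sg (F - {v}) v * (-1) ^ card \<rho>"
      unfolding c_def \<epsilon>_def \<mu>_def using sign_combine[OF fr finF vF dj] by (simp add: mult.assoc)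
    have e2: "z \<rho> = (c * \<mu> \<rho>) * bdW V' b \<rho>"
    proof -
      have "z \<rho> = (c * c) * z \<rho>" using cc by simp
      also have "\<dots> = c * (\<mu> \<rho> * bdW V' b \<rho>)" using e1 by (simp add: mult.assoc)
      finally show ?thesis by (simp add: mult.assoc)
    qed
    show ?thesis
    proof (cases "int (card \<rho>) = j + 1")
      case True
      then have "card \<rho> = nat (j + 1)" by simp
      then show ?thesis using e2 sc unfolding s_def by simp
    next
      case False
      then have z0: "z \<rho> = 0" using zsupp by blast
      have "(sg (F - {v}) v * (-1) ^ card \<rho>) * (sg (F - {v}) v * (-1) ^ card \<rho>) = (1::int)"
        by (simp add: algebra_simps power_mult_distrib[symmetric] flip: power_add)
      then have "bdW V' b \<rho> = 0" using e2 z0 sc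
        by (metis mult.assoc mult_1 mult_zero_right)
      then show ?thesis using z0 by simp
    qed
  qed
  define b' where "b' \<rho> = s * b \<rho>" for \<rho>
  have b'C: "b' \<in> chains L (j + 1)" using bC unfolding chains_def b'_def by auto
  have "z = bdry L b'"
  proof
    fix \<rho>
    have "bdry L b' \<rho> = bdW V' b' \<rho>"
      using finV UL bsupp unfolding b'_def by (intro bdry_eq) auto
    also have "\<dots> = s * bdW V' b \<rho>" unfolding bdW_def b'_def
      by (simp add: sum_distrib_left algebra_simps)
    finally show "z \<rho> = bdry L b' \<rho>" using zeq by simp
  qed
  then show False using znb b'C by blast
qed

lemma ereal_aux: fixes a t :: ereal and r :: real
  assumes "a \<le> t + ereal (r - 1)" shows "a - ereal r + 1 \<le> t"
  using assms by (cases a; cases t) auto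

lemma conn_shift:
  fixes K L :: "'a::linorder set set" and d :: nat
  assumes H: "\<And>j. \<not> homology_vanishes L j \<Longrightarrow> \<not> homology_vanishes K (j + int d - 1)"
  shows "conn_h L \<ge> conn_h K - ereal (real d) + 1"
proof -
  define T where "T = conn_h L"
  have "conn_h K \<le> T + ereal (real d - 1)"
    unfolding conn_h_def
  proof (rule Sup_least)
    fix x assume "x \<in> {ereal (real_of_int k) |k. \<forall>i\<le>k. homology_vanishes K i}"
    then obtain k where x: "x = ereal (real_of_int k)" and hk: "\<forall>i\<le>k. homology_vanishes K i" by blast
    have "\<forall>i\<le>k - int d + 1. homology_vanishes L i"
    proof (intro allI impI)
      fix i assume "i \<le> k - int d + 1"
      then have "i + int d - 1 \<le> k" by simp
      then show "homology_vanishes L i" using H hk by blast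
    qed
    then have "ereal (real_of_int (k - int d + 1)) \<le> T"
      unfolding T_def conn_h_def by (intro Sup_upper) blast
    then show "x \<le> T + ereal (real d - 1)" unfolding x
      by (cases T) auto
  qed
  then show ?thesis unfolding T_def by (rule ereal_aux)
qed

lemma step_exists: "\<not> P (0::nat) \<Longrightarrow> P n \<Longrightarrow> \<exists>i<n. \<not> P i \<and> P (Suc i)"
proof (induction n)
  case 0 then show ?case by simp
next
  case (Suc n)
  show ?case
  proof (cases "P n")
    case True
    then obtain i where "i < n" "\<not> P i \<and> P (Suc i)" using Suc by blast
    then show ?thesis by (intro exI[of _ i]) auto
  next
    case False
    then show ?thesis using Suc by (intro exI[of _ n]) auto
  qed
qed

lemma pc_P1:
  assumes hg: "hypergraph C" and un: "uniform d C" and pc: "properly_connected d C"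
    and FC: "F \<in> snd C" and GC: "G \<in> snd C" and FG: "F \<inter> G \<noteq> {}" and cd: "card (F \<inter> G) + 2 \<le> d"
  shows "\<exists>y\<in>G - F. \<exists>E1\<in>snd C. E1 - F = {y}"
proof -
  define n where "n = d - card (F \<inter> G)"
  have n2: "n \<ge> 2" using cd unfolding n_def by simp
  define S where "S = {enat (length xs) | es xs. irredundant_chain C F G es xs}"
  have "chain_dist C F G = enat n" using pc FC GC FG unfolding properly_connected_def n_def by blast
  then have IS: "Inf S = enat n" unfolding chain_dist_def S_def by simp
  have "S \<noteq> {}" using IS by (auto simp: Inf_enat_def)
  then have "Inf S \<in> S" unfolding Inf_enat_def by (auto intro: LeastI)
  then obtain es xs where ir: "irredundant_chain C F G es xs" and lx: "enat (length xs) = enat n"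
    using IS unfolding S_def by auto
  have lxn: "length xs = n" using lx by simp
  have prp: "proper_chain C F G es xs" using ir unfolding irredundant_chain_def by blast
  have les: "length es = n + 1" and ses: "set es \<subseteq> snd C" and e0: "es ! 0 = F" and en: "es ! n = G"
    and cards: "\<forall>i < n. card (es ! i \<inter> es ! (i + 1)) = card (es ! (i + 1)) - 1"
    using prp lxn unfolding proper_chain_def Let_def by auto
  have fin: "finite E" if "E \<in> snd C" for E
    using hg that unfolding hypergraph_def by (meson finite_subset)
  have cdE: "card E = d" if "E \<in> snd C" for E using un that unfolding uniform_def by blast
  have esC: "es ! i \<in> snd C" if "i \<le> n" for i using ses les that by (simp add: subset_iff)
  define Dd where "Dd i = es ! Suc i - es ! i" for i
  have cD: "card (Dd i) = 1" if "i < n" for i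
  proof -
    have a: "es ! Suc i \<in> snd C" "es ! i \<in> snd C" using esC that by auto
    have "card (Dd i) = card (es ! Suc i) - card (es ! Suc i \<inter> es ! i)"
      unfolding Dd_def using fin a by (intro card_Diff_subset_Int) auto
    also have "es ! Suc i \<inter> es ! i = es ! i \<inter> es ! (i + 1)" by auto
    also have "card (es ! i \<inter> es ! (i + 1)) = d - 1" using cards that cdE a by simp
    finally show ?thesis using cdE a cd by simp
  qed
  have cover: "G - F \<subseteq> (\<Union>i\<in>{..<n}. Dd i)"
  proof
    fix z assume z: "z \<in> G - F"
    have "\<exists>i<n. \<not> z \<in> es ! i \<and> z \<in> es ! Suc i"
      by (rule step_exists[where P = "\<lambda>i. z \<in> es ! i"]) (use z e0 en in auto)
    then show "z \<in> (\<Union>i\<in>{..<n}. Dd i)" unfolding Dd_def by blast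
  qed
  obtain y where y: "Dd 0 = {y}" using cD[of 0] n2 card_1_singletonE by (metis One_nat_def less_le_trans pos2)
  have yG: "y \<in> G"
  proof (rule ccontr)
    assume yn: "y \<notin> G"
    have "G - F \<subseteq> (\<Union>i\<in>{1..<n}. Dd i)"
    proof
      fix z assume z: "z \<in> G - F"
      then obtain i where i: "i < n" "z \<in> Dd i" using cover by blast
      have "i \<noteq> 0" using i yn z y by auto
      then show "z \<in> (\<Union>i\<in>{1..<n}. Dd i)" using i by auto
    qed
    then have "card (G - F) \<le> card (\<Union>i\<in>{1..<n}. Dd i)"
      using cD by (intro card_mono finite_UN_I) (auto intro: card_ge_0_finite)
    also have "\<dots> \<le> (\<Sum>i\<in>{1..<n}. card (Dd i))" by (rule card_UN_le) simp
    also have "\<dots> = (\<Sum>i\<in>{1..<n}. 1)" using cD by (intro sum.cong) auto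
    also have "\<dots> = n - 1" by simp
    finally have c1: "card (G - F) \<le> n - 1" .
    have "card (G - F) = card G - card (G \<inter> F)" using fin GC by (intro card_Diff_subset_Int) auto
    also have "G \<inter> F = F \<inter> G" by auto
    finally have "card (G - F) = n" unfolding n_def using cdE GC by simp
    then show False using c1 n2 by simp
  qed
  have E1: "es ! 1 \<in> snd C" using esC n2 by simp
  have "es ! 1 - F = {y}" using y e0 unfolding Dd_def by simp
  moreover have "y \<notin> F" using y e0 unfolding Dd_def by auto
  ultimately show ?thesis using yG E1 by blast
qed

definition P1 :: "nat \<Rightarrow> 'a hgraph \<Rightarrow> bool" where
  "P1 d C \<longleftrightarrow> (\<forall>F\<in>snd C. \<forall>G\<in>snd C. F \<inter> G \<noteq> {} \<longrightarrow> card (F \<inter> G) + 2 \<le> d \<longrightarrow>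
     (\<exists>y\<in>G - F. \<exists>E1\<in>snd C. E1 - F = {y}))"

definition hsimp :: "nat \<Rightarrow> 'a hgraph \<Rightarrow> bool" where
  "hsimp d C \<longleftrightarrow> (\<forall>A. A \<noteq> {} \<and> A \<subseteq> fst C \<longrightarrow>
     (\<exists>v\<in>A. induces_complete d (induced C A) (nbrs (induced C A) v)))"

definition good :: "nat \<Rightarrow> 'a hgraph \<Rightarrow> bool" where
  "good d C \<longleftrightarrow> hypergraph C \<and> uniform d C \<and> P1 d C \<and> hsimp d C"

lemma induced_induced: "A \<subseteq> S \<Longrightarrow> induced (induced C S) A = induced C A"
  unfolding induced_def by auto

lemma induced_good:
  assumes g: "good d C" and S: "S \<subseteq> fst C"
  shows "good d (induced C S)"
proof -
  have hg: "hypergraph C" and un: "uniform d C" and p1: "P1 d C" and hs: "hsimp d C"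
    using g unfolding good_def by auto
  have "hypergraph (induced C S)"
    using hg S unfolding hypergraph_def induced_def by (auto intro: finite_subset)
  moreover have "uniform d (induced C S)" using un unfolding uniform_def induced_def by auto
  moreover have "P1 d (induced C S)"
    unfolding P1_def
  proof (intro ballI impI)
    fix F G assume F: "F \<in> snd (induced C S)" and G: "G \<in> snd (induced C S)"
      and "F \<inter> G \<noteq> {}" "card (F \<inter> G) + 2 \<le> d"
    have FC: "F \<in> snd C" "F \<subseteq> S" and GC: "G \<in> snd C" "G \<subseteq> S"
      using F G unfolding induced_def by auto
    obtain y E1 where y: "y \<in> G - F" "E1 \<in> snd C" "E1 - F = {y}"
      using p1 FC(1) GC(1) \<open>F \<inter> G \<noteq> {}\<close> \<open>card (F \<inter> G) + 2 \<le> d\<close> unfolding P1_def by blast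
    have "E1 \<subseteq> S" using y F G unfolding induced_def by auto
    then show "\<exists>y\<in>G - F. \<exists>E1\<in>snd (induced C S). E1 - F = {y}"
      using y unfolding induced_def by auto
  qed
  moreover have "hsimp d (induced C S)"
    unfolding hsimp_def
  proof (intro allI impI)
    fix A assume A: "A \<noteq> {} \<and> A \<subseteq> fst (induced C S)"
    then have AS: "A \<subseteq> S" unfolding induced_def by simp
    then have "A \<subseteq> fst C" using S by blast
    then show "\<exists>v\<in>A. induces_complete d (induced (induced C S) A) (nbrs (induced (induced C S) A) v)"
      using hs A unfolding hsimp_def induced_induced[OF AS] by blast
  qed
  ultimately show ?thesis unfolding good_def by blast
qed

lemma delv_good:
  assumes g: "good d C" and d2: "d \<ge> 2"
  shows "good d (fst C, {E\<in>snd C. v \<notin> E})"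
proof -
  define D where "D = (fst C, {E\<in>snd C. v \<notin> E})"
  have hg: "hypergraph C" and un: "uniform d C" and p1: "P1 d C" and hs: "hsimp d C"
    using g unfolding good_def by auto
  have "hypergraph D" using hg unfolding hypergraph_def D_def by auto
  moreover have "uniform d D" using un unfolding uniform_def D_def by auto
  moreover have "P1 d D"
    unfolding P1_def
  proof (intro ballI impI)
    fix F G assume F: "F \<in> snd D" and G: "G \<in> snd D"
      and "F \<inter> G \<noteq> {}" "card (F \<inter> G) + 2 \<le> d"
    then obtain y E1 where y: "y \<in> G - F" "E1 \<in> snd C" "E1 - F = {y}"
      using p1 unfolding P1_def D_def by force
    have "v \<notin> E1" using y F G unfolding D_def by auto
    then show "\<exists>y\<in>G - F. \<exists>E1\<in>snd D. E1 - F = {y}"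
      using y unfolding D_def by auto
  qed
  moreover have "hsimp d D"
    unfolding hsimp_def
  proof (intro allI impI)
    fix A assume A: "A \<noteq> {} \<and> A \<subseteq> fst D"
    show "\<exists>w\<in>A. induces_complete d (induced D A) (nbrs (induced D A) w)"
    proof (cases "v \<in> A")
      case True
      have "nbrs (induced D A) v = {}" unfolding nbrs_def induced_def D_def by auto
      moreover have "induces_complete d (induced D A) {}"
      proof -
        have "E \<noteq> {}" if "E \<in> snd D" for E
          using hg that unfolding hypergraph_def D_def by fastforce
        then have "snd (induced (induced D A) {}) = {}" unfolding induced_def by auto
        moreover have "{S. S \<subseteq> {} \<and> card S = d} = {}" using d2 by auto
        ultimately show ?thesis unfolding induces_complete_def by simp
      qed
      ultimately show ?thesis using True by metis
    next
      case False
      have "induced D A = induced C A" unfolding induced_def D_def using False by auto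
      then show ?thesis using hs A unfolding hsimp_def D_def by auto
    qed
  qed
  ultimately show ?thesis unfolding good_def D_def by blast
qed

lemma edge_nbhd_iff: "y \<in> edge_nbhd D F \<longleftrightarrow> (\<exists>E\<in>snd D. E - F = {y})"
proof
  assume "y \<in> edge_nbhd D F"
  then obtain E where E: "E \<in> snd D" "card (E - F) = 1" "y \<in> E - F" unfolding edge_nbhd_def by auto
  have "\<exists>a. E - F = {a}" using E(2) card_1_singleton_iff[of "E - F"] by simp
  then obtain a where a: "E - F = {a}" by blast
  have "y \<in> {a}" by (subst a[symmetric]) (rule E(3))
  then have "a = y" by simp
  then have "E - F = {y}" using a by simp
  then show "\<exists>E\<in>snd D. E - F = {y}" using E by auto
next
  assume "\<exists>E\<in>snd D. E - F = {y}"
  then obtain E where E: "E \<in> snd D" "E - F = {y}" by blast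
  have "E - F \<in> {E - F | E. E \<in> snd D \<and> card (E - F) = 1}"
    by (rule CollectI, rule exI[of _ E]) (simp add: E)
  moreover have "y \<in> E - F" using E(2) by simp
  ultimately show "y \<in> edge_nbhd D F" unfolding edge_nbhd_def by (rule UnionI)
qed

lemma nbr_edge:
  assumes hg: "hypergraph C" and un: "uniform d C"
    and cmp: "{E\<in>snd C. E \<subseteq> nbrs C v} = {S. S \<subseteq> nbrs C v \<and> card S = d}"
    and FC: "F \<in> snd C" and vF: "v \<in> F" and y: "y \<in> nbrs C v" and yF: "y \<notin> F"
  shows "insert y (F - {v}) \<in> snd C"
proof -
  have finF: "finite F" using hg FC unfolding hypergraph_def by (meson finite_subset)
  have cF: "card F = d" using un FC unfolding uniform_def by blast
  have sub: "insert y (F - {v}) \<subseteq> nbrs C v"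
  proof
    fix u assume "u \<in> insert y (F - {v})"
    then show "u \<in> nbrs C v"
    proof
      assume "u = y" then show ?thesis using y by simp
    next
      assume u: "u \<in> F - {v}"
      then show ?thesis unfolding nbrs_def using FC vF by blast
    qed
  qed
  have "card (insert y (F - {v})) = d"
  proof -
    have "card (insert y (F - {v})) = Suc (card (F - {v}))" using finF yF by simp
    also have "card (F - {v}) = d - 1" using finF vF cF by simp
    finally show ?thesis using cF vF finF card_0_eq by fastforce
  qed
  then have "insert y (F - {v}) \<in> {S. S \<subseteq> nbrs C v \<and> card S = d}" using sub by blast
  then show ?thesis using cmp by blast
qed

lemma sing_mem: "A = {y} \<Longrightarrow> y \<in> A" by simp
lemma sing_eq: "A = {a} \<Longrightarrow> y \<in> A \<Longrightarrow> y = a" by simp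
lemma sing_ne: "A - B = {y} \<Longrightarrow> A \<noteq> B"
proof
  assume "A - B = {y}" "A = B"
  then have "{y} = ({}::'a set)" by (metis Diff_cancel)
  then show False by simp
qed

lemma split_step:
  fixes C :: "'a::linorder hgraph"
  assumes g: "good d C" and d2: "d \<ge> 2"
    and cmp: "{E\<in>snd C. E \<subseteq> nbrs C v} = {S. S \<subseteq> nbrs C v \<and> card S = d}"
    and X: "X \<subseteq> {E\<in>snd C. v \<in> E}" and FC: "F \<in> snd C" and vF: "v \<in> F" and FX: "F \<notin> X"
  defines "D \<equiv> (fst C, snd C - X)"
  defines "N \<equiv> edge_nbhd D F"
  defines "V' \<equiv> fst C - (F \<union> N)"
  shows "colon D F = induced C V'"
    and "conn_h (Ind (colon D F)) \<ge> conn_h (Ind D) - ereal (real (card F)) + 1"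
proof -
  have hg: "hypergraph C" and un: "uniform d C" and p1: "P1 d C"
    using g unfolding good_def by auto
  define W where "W = fst C"
  have finW: "finite W" using hg unfolding hypergraph_def W_def by blast
  have EW: "E \<subseteq> W" if "E \<in> snd C" for E using hg that unfolding hypergraph_def W_def by blast
  have finE: "finite E" if "E \<in> snd C" for E using EW finW that finite_subset by blast
  have cE: "card E = d" if "E \<in> snd C" for E using un that unfolding uniform_def by blast
  have anti: "E = G" if "E \<in> snd C" "G \<in> snd C" "E \<subseteq> G" for E G
    using hg that unfolding hypergraph_def by blast
  have FW: "F \<subseteq> W" using EW FC by blast
  have finF: "finite F" using finE FC by blast
  have cF: "card F = d" using cE FC by blast
  have sD: "snd D = snd C - X" and fD: "fst D = W" unfolding D_def W_def by auto
  have FD: "F \<in> snd D" using FC FX sD by blast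
  have V'_def': "V' = W - (F \<union> N)" unfolding V'_def W_def by simp
  have NF': "y \<in> N \<longleftrightarrow> (\<exists>E\<in>snd D. E - F = {y})" for y unfolding N_def by (rule edge_nbhd_iff)
  have ins: "insert y (F - {v}) \<in> snd D" if y: "y \<in> nbrs C v" "y \<notin> F" for y
  proof -
    have a: "insert y (F - {v}) \<in> snd C" using nbr_edge[OF hg un cmp FC vF y] .
    have "y \<noteq> v" using y unfolding nbrs_def by blast
    then have "v \<notin> insert y (F - {v})" by blast
    then have "insert y (F - {v}) \<notin> X" using X by blast
    then show ?thesis using a sD by blast
  qed
  have insF: "insert y (F - {v}) - F = {y}" if "y \<notin> F" for y using that vF by blast
  have K3': "insert x (F - {v}) \<in> snd D" if x: "x \<in> N" for x
  proof -
    obtain E where E: "E \<in> snd D" "E - F = {x}" using iffD1[OF NF' x] by (elim bexE)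
    have EC: "E \<in> snd C" using E sD by blast
    have "x \<in> E - F" using sing_mem[OF E(2)] .
    then have xE: "x \<in> E" "x \<notin> F" by auto
    show ?thesis
    proof (cases "v \<in> E")
      case True
      have "x \<in> nbrs C v" unfolding nbrs_def using EC True xE vF by blast
      then show ?thesis using ins xE by blast
    next
      case False
      have sub: "E \<subseteq> insert x (F - {v})"
      proof
        fix u assume u: "u \<in> E"
        show "u \<in> insert x (F - {v})"
        proof (cases "u \<in> F")
          case True
          then show ?thesis using u False by auto
        next
          case False
          then have "u \<in> E - F" using u by blast
          then have "u = x" using sing_eq[OF E(2)] by blast
          then show ?thesis by simp
        qed
      qed
      have "card (insert x (F - {v})) = d"
      proof -
        have "card (insert x (F - {v})) = Suc (card (F - {v}))" using finF xE by simp
        also have "card (F - {v}) = d - 1" using finF vF cF by simp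
        finally show ?thesis using d2 by simp
      qed
      then have "E = insert x (F - {v})"
        using sub cE[OF EC] finF by (intro card_subset_eq) auto
      then show ?thesis using E(1) by simp
    qed
  qed
  have NW: "N \<subseteq> W - F"
  proof
    fix y assume "y \<in> N"
    then have "\<exists>E\<in>snd D. E - F = {y}" by (rule iffD1[OF NF'])
    then obtain E where E: "E \<in> snd D" "E - F = {y}" by (elim bexE)
    have "y \<in> E - F" using sing_mem[OF E(2)] .
    moreover have "E \<subseteq> W" using E(1) sD EW by blast
    ultimately show "y \<in> W - F" by blast
  qed
  have NFp: "\<exists>y\<in>G - F. y \<in> N" if G: "G \<in> snd D" "G \<noteq> F" "G \<inter> F \<noteq> {}" for G
  proof -
    have GC: "G \<in> snd C" using G sD by blast
    show ?thesis
    proof (cases "card (F \<inter> G) + 2 \<le> d")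
      case True
      obtain y E1 where y: "y \<in> G - F" "E1 \<in> snd C" "E1 - F = {y}"
        using p1 FC GC True G(3) unfolding P1_def by (metis inf_commute)
      have "y \<in> E1 - F" using sing_mem[OF y(3)] .
      then have yE1: "y \<in> E1" "y \<notin> F" by auto
      show ?thesis
      proof (cases "E1 \<in> X")
        case True
        then have "v \<in> E1" using X by blast
        then have "y \<in> nbrs C v" unfolding nbrs_def using y(2) yE1 vF by blast
        then have "insert y (F - {v}) \<in> snd D" using ins yE1 by blast
        then have "y \<in> N" using NF' insF[OF yE1(2)] by (intro iffD2[OF NF'] bexI)
        then show ?thesis using y(1) by blast
      next
        case False
        then have "E1 \<in> snd D" using y(2) sD by blast
        then have "y \<in> N" using y(3) by (intro iffD2[OF NF'] bexI)
        then show ?thesis using y(1) by blast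
      qed
    next
      case False
      have c1: "card (F \<inter> G) \<le> d" using cE[OF GC] finE[OF GC] by (metis card_mono inf_le2)
      have c2: "card (F \<inter> G) \<noteq> d"
      proof
        assume "card (F \<inter> G) = d"
        then have "F \<inter> G = G" using finE[OF GC] cE[OF GC] by (intro card_subset_eq) auto
        then have "G \<subseteq> F" by blast
        then have "G = F" using anti GC FC by blast
        then show False using G(2) by simp
      qed
      have c3: "card (F \<inter> G) = d - 1" using False c1 c2 by simp
      have "card (G - F) = card G - card (G \<inter> F)" using finE[OF GC] by (intro card_Diff_subset_Int) auto
      also have "G \<inter> F = F \<inter> G" by blast
      finally have "card (G - F) = 1" using c3 cE[OF GC] d2 by simp
      then obtain y where y: "G - F = {y}" using card_1_singleton_iff[of "G - F"] by auto
      then have "y \<in> N" using G(1) by (intro iffD2[OF NF'] bexI)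
      moreover have "y \<in> G - F" using sing_mem[OF y] .
      ultimately show ?thesis by blast
    qed
  qed
  define Ds where "Ds = {E - F | E. E \<in> snd D - {F}}"
  have sing: "{y} \<in> Ds" if yN: "y \<in> N" for y
  proof -
    obtain E where E: "E \<in> snd D" "E - F = {y}" using iffD1[OF NF' yN] by (elim bexE)
    have "E \<noteq> F" using sing_ne[OF E(2)] .
    then show ?thesis unfolding Ds_def using E by blast
  qed
  have colon_snd: "{M \<in> Ds. (\<forall>M'\<in>Ds. M' \<subseteq> M \<longrightarrow> M' = M) \<and> card M \<ge> 2} = {G\<in>snd D. G \<subseteq> V'}"
  proof (intro equalityI subsetI)
    fix M assume "M \<in> {M \<in> Ds. (\<forall>M'\<in>Ds. M' \<subseteq> M \<longrightarrow> M' = M) \<and> card M \<ge> 2}"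
    then have M: "M \<in> Ds" and mn: "\<forall>M'\<in>Ds. M' \<subseteq> M \<longrightarrow> M' = M" and cM: "card M \<ge> 2" by auto
    obtain G where G: "G \<in> snd D" "G \<noteq> F" "M = G - F" using M unfolding Ds_def by blast
    have noN: "y \<notin> M" if "y \<in> N" for y
    proof
      assume yM: "y \<in> M"
      have "{y} = M" using mn sing[OF that] yM by blast
      then show False using cM by auto
    qed
    have GF: "G \<inter> F = {}"
    proof (rule ccontr)
      assume "G \<inter> F \<noteq> {}"
      then obtain y where "y \<in> G - F" "y \<in> N" using NFp G by blast
      then show False using noN G(3) by blast
    qed
    have "G \<subseteq> W" using G(1) sD EW by blast
    then have "G \<subseteq> V'" unfolding V'_def' using GF noN G(3) by blast
    moreover have "M = G" using GF G(3) by blast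
    ultimately show "M \<in> {G\<in>snd D. G \<subseteq> V'}" using G(1) by blast
  next
    fix G assume "G \<in> {G\<in>snd D. G \<subseteq> V'}"
    then have G: "G \<in> snd D" "G \<subseteq> V'" by auto
    have GC: "G \<in> snd C" using G sD by blast
    have GF: "G \<inter> F = {}" using G(2) unfolding V'_def' by blast
    have "F \<noteq> {}" using vF by blast
    then have GnF: "G \<noteq> F" using GF by blast
    have GDs: "G \<in> Ds" unfolding Ds_def using G(1) GnF GF by (intro CollectI exI[of _ G]) auto
    have cG: "card G \<ge> 2" using cE[OF GC] d2 by simp
    have "\<forall>M'\<in>Ds. M' \<subseteq> G \<longrightarrow> M' = G"
    proof (intro ballI impI)
      fix M' assume M': "M' \<in> Ds" "M' \<subseteq> G"
      obtain G' where G': "G' \<in> snd D" "G' \<noteq> F" "M' = G' - F" using M'(1) unfolding Ds_def by blast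
      show "M' = G"
      proof (cases "G' \<inter> F = {}")
        case True
        then have "G' \<subseteq> G" using G' M' by blast
        then have "G' = G" using anti G'(1) GC sD by blast
        then show ?thesis using G'(3) True by blast
      next
        case False
        then obtain y where "y \<in> G' - F" "y \<in> N" using NFp G' by blast
        then have "y \<in> V'" using M' G' G(2) by blast
        then show ?thesis using \<open>y \<in> N\<close> unfolding V'_def' by blast
      qed
    qed
    then show "G \<in> {M \<in> Ds. (\<forall>M'\<in>Ds. M' \<subseteq> M \<longrightarrow> M' = M) \<and> card M \<ge> 2}" using GDs cG by blast
  qed
  have vV: "v \<notin> V'" unfolding V'_def' using vF by blast
  have sDC: "{G\<in>snd D. G \<subseteq> V'} = {G\<in>snd C. G \<subseteq> V'}" using X vV sD by blast
  have colD: "colon D F = (V', {G\<in>snd D. G \<subseteq> V'})"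
    unfolding colon_def Let_def using colon_snd unfolding Ds_def V'_def' fD N_def by simp
  show "colon D F = induced C V'" unfolding colD induced_def sDC by simp
  define K where "K = Ind D"
  define L where "L = Ind (colon D F)"
  have Lchar: "\<rho> \<in> L \<longleftrightarrow> \<rho> \<subseteq> V' \<and> (\<forall>G\<in>snd D. G \<subseteq> V' \<longrightarrow> \<not> G \<subseteq> \<rho>)" for \<rho>
    unfolding L_def colD Ind_def by auto
  have Kchar: "\<sigma> \<in> K \<longleftrightarrow> \<sigma> \<subseteq> W \<and> (\<forall>G\<in>snd D. \<not> G \<subseteq> \<sigma>)" for \<sigma>
    unfolding K_def Ind_def fD by auto
  have V'W: "V' \<subseteq> W" unfolding V'_def' by blast
  have FV': "F \<inter> V' = {}" unfolding V'_def' by blast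
  have NV': "N \<inter> V' = {}" unfolding V'_def' by blast
  have H: "\<not> homology_vanishes K (j + int d - 1)" if nv: "\<not> homology_vanishes L j" for j
  proof (rule key_homology[OF finW vF FW V'W FV' _ _ _ _ _ _ cF nv])
    show "K \<subseteq> Pow W" using Kchar by blast
    show "L \<subseteq> Pow V'" using Lchar by blast
    show "(F - {w}) \<union> \<rho> \<in> K" if w: "w \<in> F" and r: "\<rho> \<in> L" for w \<rho>
    proof -
      have rV: "\<rho> \<subseteq> V'" using r Lchar by blast
      have "\<not> G \<subseteq> (F - {w}) \<union> \<rho>" if G: "G \<in> snd D" for G
      proof
        assume sub: "G \<subseteq> (F - {w}) \<union> \<rho>"
        show False
        proof (cases "G = F")
          case True
          then have "w \<in> (F - {w}) \<union> \<rho>" using sub w by blast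
          then show False using w rV FV' by blast
        next
          case False
          show False
          proof (cases "G \<inter> F = {}")
            case True
            then have "G \<subseteq> \<rho>" using sub by blast
            then show False using r Lchar G rV by blast
          next
            case False
            then obtain y where "y \<in> G - F" "y \<in> N" using NFp G \<open>G \<noteq> F\<close> by blast
            then have "y \<in> \<rho>" using sub by blast
            then show False using \<open>y \<in> N\<close> rV NV' by blast
          qed
        qed
      qed
      moreover have "(F - {w}) \<union> \<rho> \<subseteq> W" using FW rV V'W by blast
      ultimately show ?thesis using Kchar by blast
    qed
    show "\<sigma> \<notin> K" if "F \<subseteq> \<sigma>" for \<sigma> using that Kchar FD by blast
    show "\<sigma> \<notin> K" if "x \<in> W" "x \<notin> F" "x \<notin> V'" "insert x (F - {v}) \<subseteq> \<sigma>" for x \<sigma>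
    proof -
      have "x \<in> N" using that unfolding V'_def' by blast
      then have "insert x (F - {v}) \<in> snd D" by (rule K3')
      then show ?thesis using that Kchar by blast
    qed
    show "\<rho> \<in> L" if r1: "\<rho> \<subseteq> V'" and r2: "(F - {v}) \<union> \<rho> \<in> K" for \<rho>
    proof -
      have k: "\<forall>G\<in>snd D. \<not> G \<subseteq> (F - {v}) \<union> \<rho>" using r2 unfolding Kchar by blast
      have "\<forall>G\<in>snd D. G \<subseteq> V' \<longrightarrow> \<not> G \<subseteq> \<rho>" using k by blast
      then show ?thesis unfolding Lchar using r1 by blast
    qed
  qed
  have "conn_h L \<ge> conn_h K - ereal (real d) + 1" by (rule conn_shift) (rule H)
  then show "conn_h (Ind (colon D F)) \<ge> conn_h (Ind D) - ereal (real (card F)) + 1"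
    unfolding K_def L_def cF .
qed

lemma inner:
  fixes C :: "'a::linorder hgraph"
  assumes g: "good d C" and d2: "d \<ge> 2"
    and cmp: "{E\<in>snd C. E \<subseteq> nbrs C v} = {S. S \<subseteq> nbrs C v \<and> card S = d}"
    and vin: "\<exists>E\<in>snd C. v \<in> E"
    and IH: "\<And>C'::'a hgraph. good d C' \<Longrightarrow> card (snd C') < card (snd C) \<Longrightarrow> properly_splitted C'"
  shows "X \<subseteq> {E\<in>snd C. v \<in> E} \<Longrightarrow> properly_splitted (fst C, snd C - X)"
proof (induction "card ({E\<in>snd C. v \<in> E} - X)" arbitrary: X rule: less_induct)
  case less
  have hg: "hypergraph C" using g unfolding good_def by blast
  have finC: "finite (snd C)"
  proof -
    have "snd C \<subseteq> Pow (fst C)" using hg unfolding hypergraph_def by blast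
    moreover have "finite (fst C)" using hg unfolding hypergraph_def by blast
    ultimately show ?thesis by (meson finite_Pow_iff finite_subset)
  qed
  show ?case
  proof (cases "{E\<in>snd C. v \<in> E} - X = {}")
    case True
    have eq: "snd C - X = {E\<in>snd C. v \<notin> E}" using True less.prems by blast
    have "good d (fst C, {E\<in>snd C. v \<notin> E})" by (rule delv_good[OF g d2])
    moreover have "card {E\<in>snd C. v \<notin> E} < card (snd C)"
      using vin finC by (intro psubset_card_mono) auto
    ultimately show ?thesis using IH eq by simp
  next
    case False
    then obtain F where F: "F \<in> snd C" "v \<in> F" "F \<notin> X" by blast
    define D where "D = (fst C, snd C - X)"
    define V' where "V' = fst C - (F \<union> edge_nbhd D F)"
    have col: "colon D F = induced C V'"
      using split_step(1)[OF g d2 cmp less.prems F] unfolding D_def V'_def by simp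
    have cn: "conn_h (Ind (colon D F)) \<ge> conn_h (Ind D) - ereal (real (card F)) + 1"
      using split_step(2)[OF g d2 cmp less.prems F] unfolding D_def by simp
    have "properly_splitted D"
    proof (rule properly_splitted.split[of F])
      show "F \<in> snd D" using F unfolding D_def by simp
      show "conn_h (Ind (colon D F)) \<ge> conn_h (Ind D) - ereal (real (card F)) + 1" by (rule cn)
      have de: "del_edge D F = (fst C, snd C - insert F X)" unfolding del_edge_def D_def by auto
      have "card ({E\<in>snd C. v \<in> E} - insert F X) < card ({E\<in>snd C. v \<in> E} - X)"
        using F finC by (intro psubset_card_mono) auto
      moreover have "insert F X \<subseteq> {E\<in>snd C. v \<in> E}" using F less.prems by blast
      ultimately show "properly_splitted (del_edge D F)" unfolding de by (rule less.hyps)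
      have V'C: "V' \<subseteq> fst C" unfolding V'_def by blast
      have "good d (induced C V')" by (rule induced_good[OF g V'C])
      moreover have "card (snd (induced C V')) < card (snd C)"
      proof (rule psubset_card_mono[OF finC])
        have "F \<notin> snd (induced C V')" using F(2) unfolding induced_def V'_def by auto
        then show "snd (induced C V') \<subset> snd C" using F(1) unfolding induced_def by auto
      qed
      ultimately show "properly_splitted (colon D F)" unfolding col by (rule IH)
    qed
    then show ?thesis unfolding D_def .
  qed
qed

lemma good_splitted:
  fixes C :: "'a::linorder hgraph"
  assumes "good d C" and d2: "d \<ge> 2"
  shows "properly_splitted C"
  using assms(1)
proof (induction "card (snd C)" arbitrary: C rule: less_induct)
  case less
  show ?case
  proof (cases "snd C = {}")
    case True
    then show ?thesis by (rule properly_splitted.no_edges)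
  next
    case False
    have hg: "hypergraph C" and hs: "hsimp d C" using less.prems unfolding good_def by auto
    define A0 where "A0 = \<Union>(snd C)"
    have ne: "E \<noteq> {}" if "E \<in> snd C" for E
      using hg that unfolding hypergraph_def by fastforce
    have A0ne: "A0 \<noteq> {}" unfolding A0_def using False ne by blast
    have A0C: "A0 \<subseteq> fst C" unfolding A0_def using hg unfolding hypergraph_def by blast
    obtain v where vA: "v \<in> A0" and vc: "induces_complete d (induced C A0) (nbrs (induced C A0) v)"
      using hs A0ne A0C unfolding hsimp_def by blast
    have iA: "induced C A0 = (A0, snd C)" unfolding induced_def A0_def by auto
    have nb: "nbrs (A0, snd C) v = nbrs C v" unfolding nbrs_def by simp
    have cmp: "{E\<in>snd C. E \<subseteq> nbrs C v} = {S. S \<subseteq> nbrs C v \<and> card S = d}"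
      using vc unfolding iA nb induces_complete_def by (simp add: induced_def)
    have vin: "\<exists>E\<in>snd C. v \<in> E" using vA unfolding A0_def by blast
    have "properly_splitted (fst C, snd C - {})"
      by (rule inner[OF less.prems d2 cmp vin]) (use less.hyps in auto)
    then show ?thesis by simp
  qed
qed

theorem lemma4p2:
  fixes C :: "'a::linorder hgraph" and d :: nat
  assumes "hypergraph C"
    and "uniform d C"
    and "properly_connected d C"
    and "triangulated d C"
  shows "properly_splitted C"
proof (cases "snd C = {}")
  case True
  then show ?thesis by (rule properly_splitted.no_edges)
next
  case False
  then obtain E where E: "E \<in> snd C" by blast
  have "card E = d" using assms(2) E unfolding uniform_def by blast
  moreover have "card E \<ge> 2" using assms(1) E unfolding hypergraph_def by blast
  ultimately have d2: "d \<ge> 2" by simp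
  have p1: "P1 d C"
    unfolding P1_def
  proof (intro ballI impI)
    fix F G assume "F \<in> snd C" "G \<in> snd C" "F \<inter> G \<noteq> {}" "card (F \<inter> G) + 2 \<le> d"
    then show "\<exists>y\<in>G - F. \<exists>E1\<in>snd C. E1 - F = {y}"
      using pc_P1[OF assms(1) assms(2) assms(3)] by blast
  qed
  have hs: "hsimp d C"
    unfolding hsimp_def
  proof (intro allI impI)
    fix A assume A: "A \<noteq> {} \<and> A \<subseteq> fst C"
    from assms(4)[unfolded triangulated_def, THEN conjunct2, THEN conjunct2, rule_format, OF A]
    obtain v where "v \<in> A" "induces_complete d (induced C A) (nbrs (induced C A) v)"
      by (elim bexE conjE)
    then show "\<exists>v\<in>A. induces_complete d (induced C A) (nbrs (induced C A) v)" by (rule bexI[rotated])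
  qed
  have "good d C" unfolding good_def using assms(1,2) p1 hs by blast
  then show ?thesis using d2 by (rule good_splitted)
qed

end
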